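(* For $|q|<1$, \[ \frac{f_2^2f_3f_{12}^3}{f_4^4f_6^2}+\frac{f_2^4f_3^5f_{12}^3}{f_1^4f_4^4f_6^4}=2\,\frac{f_2f_6^5}{f_1^2f_3f_4^3}. \]
   Context: For $m\in\mathbb{N}$ and $|q|<1$, $f_m:=\prod_{n\geq 1}(1-q^{mn})$. *)

theory Defs
  imports "HOL-Analysis.Analysis"
begin

definition f :: "nat \<Rightarrow> complex \<Rightarrow> complex" where
  "f m q = (\<Prod>n. (1 - q ^ (m * Suc n)))"

end

theory Submission
  imports Defs
begin

definition qp :: "complex \<Rightarrow> complex \<Rightarrow> complex" where
  "qp a z = (\<Prod>n. 1 - a * z ^ n)"

lemma qp_convergent:
  fixes a z :: complex
  assumes "norm z < 1"
  shows "convergent_prod (\<lambda>n. 1 - a * z ^ n)"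
proof -
  have "summable (\<lambda>n. norm a * norm z ^ n)"
    using assms by (intro summable_mult summable_geometric) auto
  moreover have "(\<lambda>n. norm ((1 - a * z ^ n) - 1)) = (\<lambda>n. norm a * norm z ^ n)"
    by (rule ext) (simp add: norm_mult norm_power)
  ultimately have "summable (\<lambda>n. norm ((1 - a * z ^ n) - 1))"
    by simp
  then show ?thesis
    by (intro abs_convergent_prod_imp_convergent_prod summable_imp_abs_convergent_prod)
qed

lemma qp_tendsto:
  assumes "norm z < 1"
  shows "(\<lambda>N. \<Prod>n<N. 1 - a * z ^ n) \<longlonglongrightarrow> qp a z"
proof -
  have "(\<lambda>N. \<Prod>n\<le>N. 1 - a * z ^ n) \<longlonglongrightarrow> qp a z"
    unfolding qp_def by (rule convergent_prod_LIMSEQ[OF qp_convergent[OF assms]])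
  then have "(\<lambda>N. \<Prod>n<Suc N. 1 - a * z ^ n) \<longlonglongrightarrow> qp a z"
    by (simp add: lessThan_Suc_atMost)
  then show ?thesis by (rule LIMSEQ_imp_Suc)
qed

lemma qp_nonzero:
  assumes "norm z < 1" "norm a \<le> 1" "a \<noteq> 1"
  shows "qp a z \<noteq> 0"
  unfolding qp_def
proof (rule prodinf_nonzero[OF qp_convergent[OF assms(1)]])
  fix i :: nat
  show "1 - a * z ^ i \<noteq> 0"
  proof (cases i)
    case 0 then show ?thesis using assms by auto
  next
    case (Suc j)
    have "norm (a * z ^ i) = norm a * norm z ^ i" by (simp add: norm_mult norm_power)
    also have "\<dots> \<le> norm z ^ i" using assms by (simp add: mult_left_le_one_le)
    also have "\<dots> \<le> norm z ^ 1" by (rule power_decreasing) (use Suc assms in auto)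
    also have "\<dots> < 1" using assms by simp
    finally show ?thesis by auto
  qed
qed

lemma qp_split:
  assumes "norm z < 1" "k > 0"
  shows "qp a z = (\<Prod>r<k. qp (a * z ^ r) (z ^ k))"
proof -
  have nz: "norm (z ^ k) < 1" using assms by (simp add: norm_power power_less_one_iff)
  have "(\<lambda>N. \<Prod>n<N * k. 1 - a * z ^ n) \<longlonglongrightarrow> qp a z"
  proof -
    have "strict_mono (\<lambda>N::nat. N * k)" using assms(2) by (intro strict_monoI) auto
    from LIMSEQ_subseq_LIMSEQ[OF qp_tendsto[OF assms(1)] this] show ?thesis by (simp add: o_def)
  qed
  moreover have "(\<lambda>N. \<Prod>n<N * k. 1 - a * z ^ n) = (\<lambda>N. \<Prod>r<k. \<Prod>n<N. 1 - (a * z ^ r) * (z ^ k) ^ n)"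
  proof
    fix N
    have "(\<Prod>n<N * k. 1 - a * z ^ n) = (\<Prod>m<N. \<Prod>n\<in>{m * k..<m * k + k}. 1 - a * z ^ n)"
      by (rule prod.nat_group[symmetric])
    also have "\<dots> = (\<Prod>m<N. \<Prod>r<k. 1 - a * z ^ (m * k + r))"
    proof (rule prod.cong[OF refl])
      fix m
      show "(\<Prod>n\<in>{m * k..<m * k + k}. 1 - a * z ^ n) = (\<Prod>r<k. 1 - a * z ^ (m * k + r))"
        using prod.shift_bounds_nat_ivl[of "\<lambda>n. 1 - a * z ^ n" 0 "m*k" k]
        by (simp add: atLeast0LessThan add.commute)
    qed
    also have "\<dots> = (\<Prod>r<k. \<Prod>m<N. 1 - a * z ^ (m * k + r))"
      by (rule prod.swap)
    also have "\<dots> = (\<Prod>r<k. \<Prod>n<N. 1 - (a * z ^ r) * (z ^ k) ^ n)"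
    proof (intro prod.cong refl)
      fix r n
      have "z ^ (n * k + r) = z ^ r * (z ^ k) ^ n"
        by (simp add: power_add mult.commute flip: power_mult)
      then show "1 - a * z ^ (n * k + r) = 1 - (a * z ^ r) * (z ^ k) ^ n" by (simp add: mult.assoc)
    qed
    finally show "(\<Prod>n<N * k. 1 - a * z ^ n) = (\<Prod>r<k. \<Prod>n<N. 1 - (a * z ^ r) * (z ^ k) ^ n)" .
  qed
  moreover have "(\<lambda>N. \<Prod>r<k. \<Prod>n<N. 1 - (a * z ^ r) * (z ^ k) ^ n) \<longlonglongrightarrow> (\<Prod>r<k. qp (a * z ^ r) (z ^ k))"
    by (intro tendsto_prod qp_tendsto[OF nz])
  ultimately show ?thesis using LIMSEQ_unique by metis
qed

lemma qp_mul:
  assumes "norm z < 1"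
  shows "qp a z * qp (- a) z = qp (a ^ 2) (z ^ 2)"
proof -
  have nz: "norm (z ^ 2) < 1" using assms by (simp add: norm_power power_less_one_iff)
  have "(\<lambda>N. (\<Prod>n<N. 1 - a * z ^ n) * (\<Prod>n<N. 1 - (- a) * z ^ n)) \<longlonglongrightarrow> qp a z * qp (- a) z"
    by (intro tendsto_mult qp_tendsto assms)
  moreover have "(\<lambda>N. (\<Prod>n<N. 1 - a * z ^ n) * (\<Prod>n<N. 1 - (- a) * z ^ n)) = (\<lambda>N. \<Prod>n<N. 1 - a ^ 2 * (z ^ 2) ^ n)"
    by (auto simp: prod.distrib[symmetric] intro!: prod.cong) (simp add: algebra_simps power2_eq_square power_mult_distrib flip: power_mult)
  ultimately show ?thesis using qp_tendsto[OF nz] LIMSEQ_unique by metis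
qed

lemma qp_head:
  assumes "norm z < 1"
  shows "qp a z = (1 - a) * qp (a * z) z"
proof -
  have "(\<lambda>N. \<Prod>n<Suc N. 1 - a * z ^ n) \<longlonglongrightarrow> qp a z"
    using LIMSEQ_Suc[OF qp_tendsto[OF assms]] .
  moreover have "(\<lambda>N. \<Prod>n<Suc N. 1 - a * z ^ n) = (\<lambda>N. (1 - a) * (\<Prod>n<N. 1 - (a * z) * z ^ n))"
    by (rule ext, subst prod.lessThan_Suc_shift) (simp add: mult.assoc)
  moreover have "(\<lambda>N. (1 - a) * (\<Prod>n<N. 1 - (a * z) * z ^ n)) \<longlonglongrightarrow> (1 - a) * qp (a * z) z"
    by (intro tendsto_mult tendsto_const qp_tendsto assms)
  ultimately show ?thesis using LIMSEQ_unique by metis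
qed

lemma f_qp: "f m q = qp (q ^ m) (q ^ m)"
  unfolding f_def qp_def by (simp add: power_mult[symmetric] power_add[symmetric] mult.commute)

lemma int_summable_from_nat:
  fixes g :: "int \<Rightarrow> complex"
  assumes "summable (\<lambda>k. norm (g (int k)))" "summable (\<lambda>k. norm (g (- int k)))"
  shows "g summable_on UNIV"
proof -
  have 1: "g summable_on range int"
  proof -
    have "((\<lambda>x. norm (g x)) \<circ> int) summable_on UNIV"
      using assms(1) by (subst summable_on_UNIV_nonneg_real_iff) (auto simp: o_def)
    then have "(\<lambda>x. norm (g x)) summable_on range int"
      by (subst summable_on_reindex) (auto simp: inj_on_def)
    then show ?thesis by (simp add: summable_on_iff_abs_summable_on_complex)
  qed
  have 2: "g summable_on range (\<lambda>k. - int k)"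
  proof -
    have "((\<lambda>x. norm (g x)) \<circ> (\<lambda>k. - int k)) summable_on UNIV"
      using assms(2) by (subst summable_on_UNIV_nonneg_real_iff) (auto simp: o_def)
    then have "(\<lambda>x. norm (g x)) summable_on range (\<lambda>k. - int k)"
      by (subst summable_on_reindex) (auto simp: inj_on_def)
    then show ?thesis by (simp add: summable_on_iff_abs_summable_on_complex)
  qed
  have "UNIV = range int \<union> range (\<lambda>k. - int k)"
  proof (rule set_eqI)
    fix n :: int
    show "n \<in> UNIV \<longleftrightarrow> n \<in> range int \<union> range (\<lambda>k. - int k)"
    proof (cases "n \<ge> 0")
      case True then have "n = int (nat n)" by simp
      then show ?thesis by blast
    next
      case False then have "n = - int (nat (- n))" by simp
      then show ?thesis by blast
    qed
  qed
  then show ?thesis using summable_on_union[OF 1 2] by simp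
qed

lemma infsum_int_split:
  fixes g :: "int \<Rightarrow> complex"
  assumes "g summable_on UNIV"
  shows "infsum g UNIV = (\<Sum>k. g (int k)) + (\<Sum>k. g (- int (Suc k)))"
proof -
  have U: "UNIV = range int \<union> range (\<lambda>k. - int (Suc k))"
  proof (rule set_eqI)
    fix n :: int
    show "n \<in> UNIV \<longleftrightarrow> n \<in> range int \<union> range (\<lambda>k. - int (Suc k))"
    proof (cases "n \<ge> 0")
      case True then have "n = int (nat n)" by simp
      then show ?thesis by blast
    next
      case False then have "n = - int (Suc (nat (- n - 1)))" by simp
      then show ?thesis by blast
    qed
  qed
  have d: "range int \<inter> range (\<lambda>k. - int (Suc k)) = {}" by auto
  have s1: "g summable_on range int" by (rule summable_on_subset_banach[OF assms]) auto
  have s2: "g summable_on range (\<lambda>k. - int (Suc k))" by (rule summable_on_subset_banach[OF assms]) auto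
  have i1: "inj (int)" by (auto simp: inj_on_def)
  have i2: "inj (\<lambda>k. - int (Suc k))" by (auto simp: inj_on_def)
  have "infsum g UNIV = infsum g (range int) + infsum g (range (\<lambda>k. - int (Suc k)))"
    by (subst U, rule infsum_Un_disjoint[OF s1 s2 d])
  also have "infsum g (range int) = infsum (g \<circ> int) UNIV"
    by (rule infsum_reindex[OF i1])
  also have "infsum g (range (\<lambda>k. - int (Suc k))) = infsum (g \<circ> (\<lambda>k. - int (Suc k))) UNIV"
    by (rule infsum_reindex[OF i2])
  also have "infsum (g \<circ> int) UNIV = (\<Sum>k. g (int k))"
  proof -
    have "(g \<circ> int) summable_on UNIV" using summable_on_reindex[OF i1] s1 by blast
    then have "(g \<circ> int) sums infsum (g \<circ> int) UNIV" by (intro has_sum_imp_sums has_sum_infsum)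
    then show ?thesis by (simp add: sums_iff o_def)
  qed
  also have "infsum (g \<circ> (\<lambda>k. - int (Suc k))) UNIV = (\<Sum>k. g (- int (Suc k)))"
  proof -
    have "(g \<circ> (\<lambda>k. - int (Suc k))) summable_on UNIV" using summable_on_reindex[OF i2] s2 by blast
    then have "(g \<circ> (\<lambda>k. - int (Suc k))) sums infsum (g \<circ> (\<lambda>k. - int (Suc k))) UNIV"
      by (intro has_sum_imp_sums has_sum_infsum)
    then show ?thesis by (simp add: sums_iff o_def)
  qed
  finally show ?thesis .
qed

lemma gauss_nat_summable:
  fixes r R :: real and d :: int
  assumes "0 < r" "r < 1" "0 < R"
  shows "summable (\<lambda>k::nat. R ^ k * r powi (int k * int k + d * int k))"
proof -
  have "(\<lambda>n. R * r powi (1 + d) * (r^2) ^ n) \<longlonglongrightarrow> R * r powi (1 + d) * 0"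
    using assms by (intro tendsto_mult tendsto_const LIMSEQ_power_zero) (auto simp: power_less_one_iff abs_square_less_1)
  then have "eventually (\<lambda>n. R * r powi (1 + d) * (r^2) ^ n < 1/2) sequentially"
    by (intro order_tendstoD) auto
  then obtain N where N: "\<And>n. n \<ge> N \<Longrightarrow> R * r powi (1 + d) * (r^2) ^ n < 1/2"
    by (auto simp: eventually_sequentially)
  show ?thesis
  proof (rule summable_ratio_test[of "1/2" N])
    fix n assume n: "n \<ge> N"
    have e: "int (Suc n) * int (Suc n) + d * int (Suc n) = (int n * int n + d * int n) + (1 + d) + 2 * int n"
      by (simp add: algebra_simps)
    have rn: "r \<noteq> 0" using assms by simp
    have "r powi (int (Suc n) * int (Suc n) + d * int (Suc n))
        = r powi (int n * int n + d * int n) * r powi (1 + d) * r powi (2 * int n)"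
      unfolding e by (simp only: power_int_add[OF disjI1[OF rn]])
    also have "r powi (2 * int n) = (r^2) ^ n"
      by (simp only: power_int_mult power_int_of_nat power_int_numeral)
    finally have "R ^ Suc n * r powi (int (Suc n) * int (Suc n) + d * int (Suc n))
        = (R * r powi (1 + d) * (r^2) ^ n) * (R ^ n * r powi (int n * int n + d * int n))"
      by (simp only: power_Suc mult_ac)
    also have "\<dots> \<le> 1/2 * (R ^ n * r powi (int n * int n + d * int n))"
      using N[OF n] assms by (intro mult_right_mono) auto
    finally show "norm (R ^ Suc n * r powi (int (Suc n) * int (Suc n) + d * int (Suc n)))
        \<le> 1/2 * norm (R ^ n * r powi (int n * int n + d * int n))"
      using assms by simp
  qed auto
qed

lemma gauss_summable:
  fixes s w :: complex and c :: int
  assumes "norm s < 1" "s \<noteq> 0" "w \<noteq> 0"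
  shows "(\<lambda>n::int. w powi n * s powi (n * n + c * n)) summable_on UNIV"
proof (rule int_summable_from_nat)
  have r: "0 < norm s" "norm s < 1" using assms by auto
  have "(\<lambda>k. norm (w powi int k * s powi (int k * int k + c * int k))) = (\<lambda>k. norm w ^ k * norm s powi (int k * int k + c * int k))"
    by (rule ext) (simp only: norm_mult norm_power_int power_int_of_nat norm_power)
  then show "summable (\<lambda>k. norm (w powi int k * s powi (int k * int k + c * int k)))"
    using gauss_nat_summable[OF r, of "norm w" c] assms by simp
  have "(\<lambda>k. norm (w powi (- int k) * s powi ((- int k) * (- int k) + c * (- int k)))) = (\<lambda>k::nat. (1 / norm w) ^ k * norm s powi (int k * int k + (- c) * int k))"
  proof (rule ext)
    fix k :: nat
    have "norm (w powi (- int k)) = (1 / norm w) ^ k"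
      by (simp add: norm_power_int power_int_minus power_one_over norm_power norm_inverse divide_inverse power_inverse)
    moreover have "(- int k) * (- int k) + c * (- int k) = int k * int k + (- c) * int k" by simp
    ultimately show "norm (w powi (- int k) * s powi ((- int k) * (- int k) + c * (- int k))) = (1 / norm w) ^ k * norm s powi (int k * int k + (- c) * int k)"
      by (simp only: norm_mult norm_power_int)
  qed
  then show "summable (\<lambda>k. norm (w powi (- int k) * s powi ((- int k) * (- int k) + c * (- int k))))"
    using gauss_nat_summable[OF r, of "1 / norm w" "- c"] assms by simp
qed

definition th :: "complex \<Rightarrow> complex \<Rightarrow> complex" where
  "th s x = (\<Sum>\<^sub>\<infinity>n::int. (- x) powi n * s powi (n * n - n))"
definition thA :: "complex \<Rightarrow> complex \<Rightarrow> complex" where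
  "thA s x = (\<Sum>\<^sub>\<infinity>n::int. x powi (2 * n) * s powi (2 * n * n))"
definition thB :: "complex \<Rightarrow> complex \<Rightarrow> complex" where
  "thB s x = (\<Sum>\<^sub>\<infinity>n::int. x powi (2 * n) * s powi (2 * n * n + 2 * n))"
definition thC :: "complex \<Rightarrow> complex \<Rightarrow> complex" where
  "thC s x = (\<Sum>\<^sub>\<infinity>n::int. x powi (2 * n) * s powi (2 * n * n - 2 * n))"

lemma th_summable:
  fixes s x :: complex
  assumes "norm s < 1" "s \<noteq> 0" "x \<noteq> 0"
  shows "(\<lambda>n::int. (- x) powi n * s powi (n * n - n)) summable_on UNIV"
  using gauss_summable[of s "- x" "-1"] assms by simp

lemma two_summable:
  fixes d :: int and s x :: complex
  assumes "norm s < 1" "s \<noteq> 0" "x \<noteq> 0"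
  shows "(\<lambda>n::int. x powi (2 * n) * s powi (2 * n * n + 2 * d * n)) summable_on UNIV"
proof -
  have ns: "norm (s^2) < 1" "s^2 \<noteq> 0" "x^2 \<noteq> 0" using assms by (auto simp: norm_power power_less_one_iff)
  have *: "(\<lambda>n::int. (x^2) powi n * (s^2) powi (n * n + d * n)) summable_on UNIV"
    by (rule gauss_summable[OF ns])
  have "x powi (2 * n) * s powi (2 * n * n + 2 * d * n) = (x^2) powi n * (s^2) powi (n * n + d * n)" for n :: int
  proof -
    have "2 * n * n + 2 * d * n = 2 * (n * n + d * n)" by (simp add: algebra_simps)
    then show ?thesis by (simp only: power_int_mult power_int_numeral)
  qed
  then show ?thesis using * by simp
qed

lemma thA_summable: "norm (s::complex) < 1 \<Longrightarrow> s \<noteq> 0 \<Longrightarrow> x \<noteq> 0 \<Longrightarrow> (\<lambda>n::int. x powi (2 * n) * s powi (2 * n * n)) summable_on UNIV"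
  using two_summable[of s x 0] by simp
lemma thB_summable: "norm (s::complex) < 1 \<Longrightarrow> s \<noteq> 0 \<Longrightarrow> x \<noteq> 0 \<Longrightarrow> (\<lambda>n::int. x powi (2 * n) * s powi (2 * n * n + 2 * n)) summable_on UNIV"
  using two_summable[of s x 1] by simp
lemma thC_summable: "norm (s::complex) < 1 \<Longrightarrow> s \<noteq> 0 \<Longrightarrow> x \<noteq> 0 \<Longrightarrow> (\<lambda>n::int. x powi (2 * n) * s powi (2 * n * n - 2 * n)) summable_on UNIV"
  using two_summable[of s x "-1"] by simp

lemma infsum_product:
  fixes F G :: "int \<Rightarrow> complex"
  assumes F: "F summable_on UNIV" and G: "G summable_on UNIV"
  shows "(\<lambda>(a,b). F a * G b) summable_on UNIV"
    and "infsum (\<lambda>(a,b). F a * G b) UNIV = infsum F UNIV * infsum G UNIV"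
proof -
  have Fa: "(\<lambda>a. norm (F a)) summable_on UNIV" using F summable_on_iff_abs_summable_on_complex by blast
  have Ga: "(\<lambda>a. norm (G a)) summable_on UNIV" using G summable_on_iff_abs_summable_on_complex by blast
  have "(\<lambda>p. norm ((\<lambda>(a,b). F a * G b) p)) summable_on (Sigma UNIV (\<lambda>_. UNIV))"
  proof (rule Infinite_Sum.abs_summable_on_Sigma_iff[THEN iffD2], intro conjI ballI)
    fix a :: int
    show "(\<lambda>b. norm ((\<lambda>(a, b). F a * G b) (a, b))) summable_on UNIV"
      using summable_on_cmult_right[OF Ga, of "norm (F a)"] by (simp add: norm_mult)
  next
    define S where "S = (\<Sum>\<^sub>\<infinity>b. norm (G b))"
    have S0: "S \<ge> 0" unfolding S_def by (rule infsum_nonneg) auto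
    have E: "\<And>a. (\<Sum>\<^sub>\<infinity>b. norm (F a * G b)) = norm (F a) * S"
      unfolding S_def by (simp add: norm_mult infsum_cmult_right Ga)
    have "(\<lambda>a. norm (\<Sum>\<^sub>\<infinity>b. norm (F a * G b))) = (\<lambda>a. norm (F a) * S)"
      using S0 by (simp add: E)
    then show "(\<lambda>a. norm (\<Sum>\<^sub>\<infinity>b. norm ((\<lambda>(a, b). F a * G b) (a, b)))) summable_on UNIV"
      using summable_on_cmult_left[OF Fa, of S] by simp
  qed
  then have "(\<lambda>p. norm ((\<lambda>(a,b). F a * G b) p)) summable_on UNIV" by simp
  then show S: "(\<lambda>(a,b). F a * G b) summable_on UNIV"
    by (rule summable_on_iff_abs_summable_on_complex[THEN iffD2])
  have "infsum (\<lambda>a. infsum (\<lambda>b. F a * G b) UNIV) UNIV = infsum (\<lambda>(a,b). F a * G b) (Sigma UNIV (\<lambda>_. UNIV))"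
    by (rule infsum_Sigma'_banach) (use S in \<open>simp\<close>)
  moreover have "infsum (\<lambda>a. infsum (\<lambda>b. F a * G b) UNIV) UNIV = infsum F UNIV * infsum G UNIV"
    by (simp add: infsum_cmult_right G infsum_cmult_left F)
  ultimately show "infsum (\<lambda>(a,b). F a * G b) UNIV = infsum F UNIV * infsum G UNIV"
    by simp
qed

lemma thC_eq:
  fixes s x :: complex
  assumes "x \<noteq> 0" "s \<noteq> 0"
  shows "thC s x = x^2 * thB s x"
proof -
  have bij: "bij_betw (\<lambda>n::int. n + 1) UNIV UNIV"
    by (rule bij_betwI[where g="\<lambda>n. n - 1"]) auto
  have "thC s x = infsum (\<lambda>n::int. (x powi (2 * (n + 1)) * s powi (2 * (n + 1) * (n + 1) - 2 * (n + 1)))) UNIV"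
    unfolding thC_def by (rule infsum_reindex_bij_betw[OF bij, symmetric])
  also have "\<dots> = infsum (\<lambda>n::int. x^2 * (x powi (2 * n) * s powi (2 * n * n + 2 * n))) UNIV"
  proof (rule infsum_cong)
    fix n :: int
    have 1: "x powi (2 * (n + 1)) = x powi (2 * n) * x^2" using assms by (simp add: distrib_left power_int_add)
    have 2: "s powi (2 * (n + 1) * (n + 1) - 2 * (n + 1)) = s powi (2 * n * n + 2 * n)"
      by (rule arg_cong[where f="power_int s"]) (simp add: algebra_simps)
    show "x powi (2 * (n + 1)) * s powi (2 * (n + 1) * (n + 1) - 2 * (n + 1)) = x^2 * (x powi (2 * n) * s powi (2 * n * n + 2 * n))"
      unfolding 1 2 by (simp add: mult_ac)
  qed
  also have "\<dots> = x^2 * thB s x" unfolding thB_def by (rule infsum_cmult_right')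
  finally show ?thesis .
qed

lemma pw_helper:
  fixes x y :: complex and m n :: int
  assumes "x \<noteq> 0" "y \<noteq> 0"
  shows "(- (x * y)) powi m * (- (x / y)) powi n = (-1) powi (m + n) * x powi (m + n) * y powi (m - n)"
proof -
  have a: "- (x * y) = (-1) * x * y" by simp
  have b: "- (x / y) = (-1) * x * inverse y" by (simp add: divide_inverse)
  have 1: "(- (x * y)) powi m = (-1) powi m * x powi m * y powi m"
    by (subst a, simp only: power_int_mult_distrib)
  have 2: "(- (x / y)) powi n = (-1) powi n * x powi n * inverse (y powi n)"
    by (subst b, simp only: power_int_mult_distrib power_int_inverse)
  have 3: "(-1::complex) powi (m + n) = (-1) powi m * (-1) powi n" by (rule power_int_add) simp
  have 4: "x powi (m + n) = x powi m * x powi n" by (rule power_int_add) (simp add: assms)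
  have 5: "y powi (m - n) = y powi m / y powi n" by (rule power_int_diff) (simp add: assms)
  show ?thesis unfolding 1 2 3 4 5 by (simp add: divide_inverse mult_ac)
qed

lemma neg1_even: "(-1::complex) powi (2 * a) = 1"
  by (simp only: power_int_mult power_int_numeral) simp

lemma termE:
  fixes x y s :: complex and a b :: int
  assumes "x \<noteq> 0" "y \<noteq> 0" "s \<noteq> 0"
  shows "((- (x*y)) powi (a+b) * s powi ((a+b)*(a+b) - (a+b))) * ((- (x/y)) powi (a-b) * s powi ((a-b)*(a-b) - (a-b)))
       = (x powi (2*a) * s powi (2*a*a - 2*a)) * (y powi (2*b) * s powi (2*b*b))"
proof -
  have e1: "a + b + (a - b) = 2 * a" and e2: "a + b - (a - b) = 2 * b" by simp_all
  have 1: "(- (x*y)) powi (a+b) * (- (x/y)) powi (a-b) = x powi (2*a) * y powi (2*b)"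
    unfolding pw_helper[OF assms(1,2)] e1 e2 neg1_even by simp
  have 2: "s powi ((a+b)*(a+b) - (a+b)) * s powi ((a-b)*(a-b) - (a-b)) = s powi (2*a*a - 2*a) * s powi (2*b*b)"
  proof -
    have "s powi ((a+b)*(a+b) - (a+b)) * s powi ((a-b)*(a-b) - (a-b)) = s powi (((a+b)*(a+b) - (a+b)) + ((a-b)*(a-b) - (a-b)))"
      by (simp only: power_int_add[OF disjI1[OF assms(3)]])
    also have "((a+b)*(a+b) - (a+b)) + ((a-b)*(a-b) - (a-b)) = (2*a*a - 2*a) + (2*b*b)"
      by (simp add: algebra_simps)
    also have "s powi ((2*a*a - 2*a) + (2*b*b)) = s powi (2*a*a - 2*a) * s powi (2*b*b)"
      by (simp only: power_int_add[OF disjI1[OF assms(3)]])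
    finally show ?thesis .
  qed
  have "((- (x*y)) powi (a+b) * s powi ((a+b)*(a+b) - (a+b))) * ((- (x/y)) powi (a-b) * s powi ((a-b)*(a-b) - (a-b)))
      = ((- (x*y)) powi (a+b) * (- (x/y)) powi (a-b)) * (s powi ((a+b)*(a+b) - (a+b)) * s powi ((a-b)*(a-b) - (a-b)))"
    by (simp only: mult_ac)
  also have "\<dots> = (x powi (2*a) * y powi (2*b)) * (s powi (2*a*a - 2*a) * s powi (2*b*b))"
    unfolding 1 2 ..
  finally show ?thesis by (simp only: mult_ac)
qed

lemma termO:
  fixes x y s :: complex and a b :: int
  assumes "x \<noteq> 0" "y \<noteq> 0" "s \<noteq> 0"
  shows "((- (x*y)) powi (a+b+1) * s powi ((a+b+1)*(a+b+1) - (a+b+1))) * ((- (x/y)) powi (a-b) * s powi ((a-b)*(a-b) - (a-b)))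
       = (- (x * y)) * ((x powi (2*a) * s powi (2*a*a)) * (y powi (2*b) * s powi (2*b*b + 2*b)))"
proof -
  have e1: "a + b + 1 + (a - b) = 2 * a + 1" and e2: "a + b + 1 - (a - b) = 2 * b + 1" by simp_all
  have m1: "(-1::complex) powi (2 * a + 1) = -1"
    by (subst power_int_add) (simp_all add: neg1_even)
  have x1: "x powi (2 * a + 1) = x powi (2 * a) * x" by (rule power_int_add_1) (simp add: assms)
  have y1: "y powi (2 * b + 1) = y powi (2 * b) * y" by (rule power_int_add_1) (simp add: assms)
  have 1: "(- (x*y)) powi (a+b+1) * (- (x/y)) powi (a-b) = - (x * y) * (x powi (2*a) * y powi (2*b))"
    unfolding pw_helper[OF assms(1,2)] e1 e2 m1 x1 y1 by (simp add: mult_ac)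
  have 2: "s powi ((a+b+1)*(a+b+1) - (a+b+1)) * s powi ((a-b)*(a-b) - (a-b)) = s powi (2*a*a) * s powi (2*b*b + 2*b)"
  proof -
    have "s powi ((a+b+1)*(a+b+1) - (a+b+1)) * s powi ((a-b)*(a-b) - (a-b)) = s powi (((a+b+1)*(a+b+1) - (a+b+1)) + ((a-b)*(a-b) - (a-b)))"
      by (simp only: power_int_add[OF disjI1[OF assms(3)]])
    also have "((a+b+1)*(a+b+1) - (a+b+1)) + ((a-b)*(a-b) - (a-b)) = (2*a*a) + (2*b*b + 2*b)"
      by (simp add: algebra_simps)
    also have "s powi ((2*a*a) + (2*b*b + 2*b)) = s powi (2*a*a) * s powi (2*b*b + 2*b)"
      by (simp only: power_int_add[OF disjI1[OF assms(3)]])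
    finally show ?thesis .
  qed
  have "((- (x*y)) powi (a+b+1) * s powi ((a+b+1)*(a+b+1) - (a+b+1))) * ((- (x/y)) powi (a-b) * s powi ((a-b)*(a-b) - (a-b)))
      = ((- (x*y)) powi (a+b+1) * (- (x/y)) powi (a-b)) * (s powi ((a+b+1)*(a+b+1) - (a+b+1)) * s powi ((a-b)*(a-b) - (a-b)))"
    by (simp only: mult_ac)
  also have "\<dots> = (- (x * y) * (x powi (2*a) * y powi (2*b))) * (s powi (2*a*a) * s powi (2*b*b + 2*b))"
    unfolding 1 2 ..
  finally show ?thesis by (simp only: mult_ac)
qed

lemma schroeter:
  fixes s x y :: complex
  assumes s: "norm s < 1" "s \<noteq> 0" and xy: "x \<noteq> 0" "y \<noteq> 0"
  shows "th s (x*y) * th s (x/y) = thC s x * thA s y - x * y * thA s x * thB s y"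
proof -
  define T where "T = (\<lambda>(m::int,n::int). ((- (x*y)) powi m * s powi (m*m - m)) * ((- (x/y)) powi n * s powi (n*n - n)))"
  have xy': "x * y \<noteq> 0" "x / y \<noteq> 0" using xy by auto
  have TS: "T summable_on UNIV" and TI: "infsum T UNIV = th s (x*y) * th s (x/y)"
    using infsum_product[OF th_summable[OF s xy'(1)] th_summable[OF s xy'(2)]]
    unfolding T_def th_def by auto
  define E where "E = {p::int\<times>int. even (fst p + snd p)}"
  define Od where "Od = {p::int\<times>int. odd (fst p + snd p)}"
  have U: "UNIV = E \<union> Od" and D: "E \<inter> Od = {}" unfolding E_def Od_def by auto
  have "infsum T UNIV = infsum T E + infsum T Od"
    unfolding U by (rule infsum_Un_disjoint[OF summable_on_subset_banach[OF TS] summable_on_subset_banach[OF TS] D]) auto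
  moreover have "infsum T E = thC s x * thA s y"
  proof -
    have bij: "bij_betw (\<lambda>(a,b). (a+b, a-b)) (UNIV :: (int\<times>int) set) E"
      unfolding E_def
      by (rule bij_betwI[where g="\<lambda>(m,n). ((m+n) div 2, (m-n) div 2)"]) (auto, presburger+)
    have "infsum T E = infsum (\<lambda>p. T ((\<lambda>(a,b). (a+b, a-b)) p)) UNIV"
      by (rule infsum_reindex_bij_betw[OF bij, symmetric])
    also have "\<dots> = infsum (\<lambda>(a,b). (x powi (2*a) * s powi (2*a*a - 2*a)) * (y powi (2*b) * s powi (2*b*b))) UNIV"
      by (rule infsum_cong) (auto simp: T_def termE[OF xy s(2)])
    also have "\<dots> = thC s x * thA s y"
      unfolding thC_def thA_def by (rule infsum_product(2)[OF thC_summable[OF s xy(1)] thA_summable[OF s xy(2)]])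
    finally show ?thesis .
  qed
  moreover have "infsum T Od = - (x * y) * (thA s x * thB s y)"
  proof -
    have bij: "bij_betw (\<lambda>(a,b). (a+b+1, a-b)) (UNIV :: (int\<times>int) set) Od"
      unfolding Od_def
      by (rule bij_betwI[where g="\<lambda>(m,n). ((m+n-1) div 2, (m-n-1) div 2)"]) (auto, presburger+)
    have "infsum T Od = infsum (\<lambda>p. T ((\<lambda>(a,b). (a+b+1, a-b)) p)) UNIV"
      by (rule infsum_reindex_bij_betw[OF bij, symmetric])
    also have "\<dots> = infsum (\<lambda>p. (- (x * y)) * (\<lambda>(a,b). (x powi (2*a) * s powi (2*a*a)) * (y powi (2*b) * s powi (2*b*b + 2*b))) p) UNIV"
      by (rule infsum_cong) (auto simp: T_def termO[OF xy s(2)])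
    also have "\<dots> = - (x * y) * infsum (\<lambda>(a,b). (x powi (2*a) * s powi (2*a*a)) * (y powi (2*b) * s powi (2*b*b + 2*b))) UNIV"
      by (rule infsum_cmult_right')
    also have "infsum (\<lambda>(a,b). (x powi (2*a) * s powi (2*a*a)) * (y powi (2*b) * s powi (2*b*b + 2*b))) UNIV = thA s x * thB s y"
      unfolding thA_def thB_def by (rule infsum_product(2)[OF thA_summable[OF s xy(1)] thB_summable[OF s xy(2)]])
    finally show ?thesis .
  qed
  ultimately show ?thesis using TI by simp
qed

lemma th_inv:
  fixes s z :: complex
  assumes "s \<noteq> 0" "z \<noteq> 0"
  shows "th s (1 / z) = - (1 / z) * th s z"
proof -
  have bij: "bij_betw (\<lambda>k::int. 1 - k) UNIV UNIV"
    by (rule bij_betwI[where g="\<lambda>k. 1 - k"]) auto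
  have "th s (1 / z) = infsum (\<lambda>k::int. (- (1 / z)) powi (1 - k) * s powi ((1 - k) * (1 - k) - (1 - k))) UNIV"
    unfolding th_def by (rule infsum_reindex_bij_betw[OF bij, symmetric])
  also have "\<dots> = infsum (\<lambda>k::int. (- (1 / z)) * ((- z) powi k * s powi (k * k - k))) UNIV"
  proof (rule infsum_cong)
    fix k :: int
    have nz: "- (1 / z) \<noteq> 0" using assms by simp
    have "(- (1 / z)) powi (1 - k) = (- (1 / z)) powi 1 * (- (1 / z)) powi (- k)"
      using power_int_add[OF disjI1[OF nz], of 1 "- k"] by simp
    also have "(- (1 / z)) powi (- k) = (- z) powi k"
      by (simp add: power_int_minus power_int_inverse[symmetric] divide_inverse)
    finally have 1: "(- (1 / z)) powi (1 - k) = (- (1 / z)) * (- z) powi k" by simp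
    have 2: "(1 - k) * (1 - k) - (1 - k) = k * k - k" by (simp add: algebra_simps)
    show "(- (1 / z)) powi (1 - k) * s powi ((1 - k) * (1 - k) - (1 - k)) = (- (1 / z)) * ((- z) powi k * s powi (k * k - k))"
      unfolding 1 2 by (simp only: mult_ac)
  qed
  also have "\<dots> = - (1 / z) * th s z" unfolding th_def by (rule infsum_cmult_right')
  finally show ?thesis .
qed

lemma th_p:
  fixes s z :: complex
  assumes "s \<noteq> 0" "z \<noteq> 0"
  shows "th s (s^2 * z) = - (1 / z) * th s z"
proof -
  have bij: "bij_betw (\<lambda>k::int. k - 1) UNIV UNIV"
    by (rule bij_betwI[where g="\<lambda>k. k + 1"]) auto
  have "th s (s^2 * z) = infsum (\<lambda>k::int. (- (s^2 * z)) powi (k - 1) * s powi ((k - 1) * (k - 1) - (k - 1))) UNIV"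
    unfolding th_def by (rule infsum_reindex_bij_betw[OF bij, symmetric])
  also have "\<dots> = infsum (\<lambda>k::int. (- (1 / z)) * ((- z) powi k * s powi (k * k - k))) UNIV"
  proof (rule infsum_cong)
    fix k :: int
    have nz: "- z \<noteq> 0" using assms by simp
    have a: "- (s^2 * z) = s powi 2 * (- z)" by simp
    have "(- (s^2 * z)) powi (k - 1) = s powi (2 * (k - 1)) * (- z) powi (k - 1)"
      unfolding a power_int_mult_distrib power_int_mult ..
    also have "(- z) powi (k - 1) = (- z) powi k / (- z)"
      using power_int_diff[OF disjI1[OF nz], of k 1] by simp
    finally have 1: "(- (s^2 * z)) powi (k - 1) = s powi (2 * (k - 1)) * ((- z) powi k / (- z))" .
    have 2: "s powi (2 * (k - 1)) * s powi ((k - 1) * (k - 1) - (k - 1)) = s powi (k * k - k)"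
    proof -
      have "s powi (2 * (k - 1)) * s powi ((k - 1) * (k - 1) - (k - 1)) = s powi (2 * (k - 1) + ((k - 1) * (k - 1) - (k - 1)))"
        by (simp only: power_int_add[OF disjI1[OF assms(1)]])
      also have "2 * (k - 1) + ((k - 1) * (k - 1) - (k - 1)) = k * k - k" by (simp add: algebra_simps)
      finally show ?thesis .
    qed
    have "(- (s^2 * z)) powi (k - 1) * s powi ((k - 1) * (k - 1) - (k - 1))
        = (s powi (2 * (k - 1)) * s powi ((k - 1) * (k - 1) - (k - 1))) * ((- z) powi k / (- z))"
      unfolding 1 by (simp only: mult_ac)
    also have "\<dots> = (- (1 / z)) * ((- z) powi k * s powi (k * k - k))"
      unfolding 2 using assms by (simp add: field_simps)
    finally show "(- (s^2 * z)) powi (k - 1) * s powi ((k - 1) * (k - 1) - (k - 1)) = (- (1 / z)) * ((- z) powi k * s powi (k * k - k))" .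
  qed
  also have "\<dots> = - (1 / z) * th s z" unfolding th_def by (rule infsum_cmult_right')
  finally show ?thesis .
qed

lemma th_sym:
  fixes s z :: complex
  assumes "s \<noteq> 0" "z \<noteq> 0"
  shows "th s (s^2 / z) = th s z"
proof -
  have "th s (s^2 / z) = th s (s^2 * (1 / z))" by simp
  also have "\<dots> = - (1 / (1 / z)) * th s (1 / z)" using th_p[OF assms(1), of "1 / z"] assms by simp
  also have "\<dots> = th s z" using th_inv[OF assms] assms by simp
  finally show ?thesis .
qed

lemma W_alg:
  fixes x y u v a1 a2 a3 a4 b1 b2 b3 b4 :: complex
  shows "v  *  ((x^2 * b1 * a2 - x * y * a1 * b2) * (u^2 * b3 * a4 - u * v * a3 * b4) - (x^2 * b1 * a4 - x * v * a1 * b4) * (u^2 * b3 * a2 - u * y * a3 * b2))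
       = - u  *  ((x^2 * b1 * a3 - x * u * a1 * b3)  *  (v^2 * b4 * a2 - v * y * a4 * b2))"
  by (simp add: algebra_simps power2_eq_square)

lemma W_th:
  fixes s x y u v :: complex
  assumes s: "norm s < 1" "s \<noteq> 0" and nz: "x \<noteq> 0" "y \<noteq> 0" "u \<noteq> 0" "v \<noteq> 0"
  shows "v * (th s (x*y) * th s (x/y) * (th s (u * v) * th s (u/v)) - th s (x * v) * th s (x/v) * (th s (u*y) * th s (u/y)))
       = - u * (th s (x*u) * th s (x/u) * (th s (v * y) * th s (v / y)))"
proof -
  have F: "\<And>a b. a \<noteq> 0 \<Longrightarrow> b \<noteq> 0 \<Longrightarrow> th s (a * b) * th s (a / b) = a^2 * thB s a * thA s b - a * b * thA s a * thB s b"
    using schroeter[OF s] thC_eq[OF _ s(2)] by simp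
  show ?thesis
    by (simp only: F[OF nz(1) nz(2)] F[OF nz(3) nz(4)] F[OF nz(1) nz(4)] F[OF nz(3) nz(2)] F[OF nz(1) nz(3)] F[OF nz(4) nz(2)] W_alg)
qed

lemma star_th:
  fixes q :: complex
  assumes q: "norm q < 1" "q \<noteq> 0"
  shows "th (q^3) q ^ 2 * th (q^3) (q^2) ^ 2 + th (q^3) (-q) ^ 2 * th (q^3) (-(q^2)) ^ 2
       = th (q^3) (-(q^3)) ^ 2 * th (q^3) (-(q^2)) * th (q^3) (-1)"
proof -
  define s where "s = q^3"
  have s: "norm s < 1" "s \<noteq> 0" unfolding s_def using q
    by (auto simp: norm_power power_less_one_iff)
  have W: "(- q) * (th s (1 * q) * th s (1 / q) * (th s ((-(q^3)) * (- q)) * th s ((-(q^3)) / (- q)))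
           - th s (1 * (- q)) * th s (1 / (- q)) * (th s ((-(q^3)) * q) * th s ((-(q^3)) / q)))
        = - (-(q^3)) * (th s (1 * (-(q^3))) * th s (1 / (-(q^3))) * (th s ((- q) * q) * th s ((- q) / q)))"
    by (rule W_th[OF s]) (use q in auto)
  have a1: "(-(q^3)) * (- q) = q^4" by (simp add: power_numeral_reduce)
  have a2: "(-(q^3)) / (- q) = q^2" using q by (simp add: power_numeral_reduce)
  have a3: "(-(q^3)) * q = - (q^4)" by (simp add: power_numeral_reduce)
  have a4: "(-(q^3)) / q = - (q^2)" using q by (simp add: power_numeral_reduce)
  have a5: "(- q) * q = - (q^2)" by (simp add: power2_eq_square)
  have a6: "(- q) / q = -1" using q by simp
  have b1: "th s (1 / q) = - (1 / q) * th s q" by (rule th_inv[OF s(2) q(2)])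
  have b2: "th s (1 / (- q)) = - (1 / (- q)) * th s (- q)" by (rule th_inv[OF s(2)]) (use q in simp)
  have b3: "th s (1 / (-(q^3))) = - (1 / (-(q^3))) * th s (-(q^3))" by (rule th_inv[OF s(2)]) (use q in simp)
  have b4: "th s (q^4) = th s (q^2)"
  proof -
    have "s^2 / q^2 = q^4" unfolding s_def using q by (simp add: field_simps power_numeral_reduce)
    then show ?thesis using th_sym[OF s(2), of "q^2"] q by simp
  qed
  have b5: "th s (- (q^4)) = th s (- (q^2))"
  proof -
    have "s^2 / (- (q^2)) = - (q^4)" unfolding s_def using q by (simp add: field_simps power_numeral_reduce)
    then show ?thesis using th_sym[OF s(2), of "- (q^2)"] q by simp
  qed
  have "(- q) * (th s q * (- (1 / q) * th s q) * (th s (q^2) * th s (q^2))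
           - th s (- q) * (- (1 / (- q)) * th s (- q)) * (th s (- (q^2)) * th s (- (q^2))))
        = - (-(q^3)) * (th s (-(q^3)) * (- (1 / (-(q^3))) * th s (-(q^3))) * (th s (- (q^2)) * th s (-1)))"
    using W unfolding a1 a2 a3 a4 a5 a6 b1 b2 b3 b4 b5 by simp
  then show ?thesis unfolding s_def[symmetric] using q s(2) by (simp add: field_simps power2_eq_square power_numeral_reduce) (metis distrib_left mult_cancel_left)
qed

fun gb :: "complex \<Rightarrow> nat \<Rightarrow> nat \<Rightarrow> complex" where
  "gb p 0 k = (if k = 0 then 1 else 0)"
| "gb p (Suc n) k = (if k = 0 then 1 else gb p n (k - 1) + p ^ k * gb p n k)"

lemma gb_0 [simp]: "gb p n 0 = 1"
  by (cases n) auto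

lemma gb_big: "k > n \<Longrightarrow> gb p n k = 0"
proof (induction n arbitrary: k)
  case 0 then show ?case by simp
next
  case (Suc n) then show ?case by (cases k) auto
qed

lemma gb_Suc': "gb p (Suc n) k = (if k = 0 then 0 else gb p n (k - 1)) + p ^ k * gb p n k"
  by (cases k) auto

lemma qbinomial:
  fixes s a :: complex
  shows "(\<Prod>j<N. 1 - a * (s^2) ^ j) = (\<Sum>k\<le>N. gb (s^2) N k * (- a) ^ k * s ^ (k * (k - 1)))"
proof (induction N arbitrary: a)
  case 0 then show ?case by simp
next
  case (Suc N)
  define p where "p = s^2"
  have ps: "p ^ k * s ^ (k * (k - 1)) = s ^ (Suc k * k)" for k
  proof -
    have "p ^ k * s ^ (k * (k - 1)) = s ^ (2 * k + k * (k - 1))" unfolding p_def by (simp add: power_add power_mult)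
    also have "2 * k + k * (k - 1) = Suc k * k" by (cases k) (simp_all add: algebra_simps)
    finally show ?thesis .
  qed
  have "(\<Prod>j<Suc N. 1 - a * p ^ j) = (1 - a) * (\<Prod>j<N. 1 - (a * p) * p ^ j)"
    by (subst prod.lessThan_Suc_shift) (simp add: mult.assoc)
  also have "\<dots> = (1 - a) * (\<Sum>k\<le>N. gb p N k * (- (a * p)) ^ k * s ^ (k * (k - 1)))"
    using Suc.IH[of "a * p"] unfolding p_def by simp
  also have "\<dots> = (\<Sum>k\<le>N. p ^ k * gb p N k * (- a) ^ k * s ^ (k * (k - 1)))
                 + (\<Sum>k\<le>N. gb p N k * (- a) ^ Suc k * s ^ (Suc k * k))"
  proof -
    define S where "S = (\<Sum>k\<le>N. gb p N k * (- (a * p)) ^ k * s ^ (k * (k - 1)))"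
    have 1: "S = (\<Sum>k\<le>N. p ^ k * gb p N k * (- a) ^ k * s ^ (k * (k - 1)))"
      unfolding S_def
    proof (rule sum.cong[OF refl])
      fix k
      have h: "(- (a * p)) ^ k = p ^ k * (- a) ^ k" by (metis mult.commute mult_minus_left power_mult_distrib)
      show "gb p N k * (- (a * p)) ^ k * s ^ (k * (k - 1)) = p ^ k * gb p N k * (- a) ^ k * s ^ (k * (k - 1))"
        unfolding h by (simp only: mult_ac)
    qed
    have 2: "(- a) * S = (\<Sum>k\<le>N. gb p N k * (- a) ^ Suc k * s ^ (Suc k * k))"
      unfolding S_def sum_distrib_left
    proof (rule sum.cong[OF refl])
      fix k
      have h: "(- (a * p)) ^ k = p ^ k * (- a) ^ k" by (metis mult.commute mult_minus_left power_mult_distrib)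
      have "(- a) * (gb p N k * (- (a * p)) ^ k * s ^ (k * (k - 1))) = gb p N k * (- a) ^ Suc k * (p ^ k * s ^ (k * (k - 1)))"
        unfolding h by (simp only: power_Suc mult_ac)
      then show "(- a) * (gb p N k * (- (a * p)) ^ k * s ^ (k * (k - 1))) = gb p N k * (- a) ^ Suc k * s ^ (Suc k * k)"
        unfolding ps .
    qed
    have "(1 - a) * S = S + (- a) * S" by (simp add: algebra_simps)
    also have "\<dots> = (\<Sum>k\<le>N. p ^ k * gb p N k * (- a) ^ k * s ^ (k * (k - 1))) + (\<Sum>k\<le>N. gb p N k * (- a) ^ Suc k * s ^ (Suc k * k))"
      by (subst 2, subst 1, rule refl)
    finally show ?thesis unfolding S_def .
  qed
  also have "\<dots> = (\<Sum>k\<le>Suc N. gb p (Suc N) k * (- a) ^ k * s ^ (k * (k - 1)))"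
  proof -
    have "(\<Sum>k\<le>Suc N. gb p (Suc N) k * (- a) ^ k * s ^ (k * (k - 1)))
        = (\<Sum>k\<le>Suc N. (if k = 0 then 0 else gb p N (k - 1)) * (- a) ^ k * s ^ (k * (k - 1)))
          + (\<Sum>k\<le>Suc N. p ^ k * gb p N k * (- a) ^ k * s ^ (k * (k - 1)))"
      unfolding gb_Suc' by (simp add: sum.distrib algebra_simps)
    also have "(\<Sum>k\<le>Suc N. (if k = 0 then 0 else gb p N (k - 1)) * (- a) ^ k * s ^ (k * (k - 1)))
             = (\<Sum>k\<le>N. gb p N k * (- a) ^ Suc k * s ^ (Suc k * k))"
      by (subst sum.atMost_Suc_shift) simp
    also have "(\<Sum>k\<le>Suc N. p ^ k * gb p N k * (- a) ^ k * s ^ (k * (k - 1)))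
             = (\<Sum>k\<le>N. p ^ k * gb p N k * (- a) ^ k * s ^ (k * (k - 1)))"
      by (simp add: gb_big)
    finally show ?thesis by simp
  qed
  finally show ?case unfolding p_def .
qed

definition pp :: "complex \<Rightarrow> nat \<Rightarrow> complex" where
  "pp p n = (\<Prod>j<n. 1 - p ^ Suc j)"

lemma pp_Suc: "pp p (Suc n) = pp p n * (1 - p ^ Suc n)"
  unfolding pp_def by simp

lemma gb_closed: "k \<le> n \<Longrightarrow> gb p n k * pp p k * pp p (n - k) = pp p n"
proof (induction n arbitrary: k)
  case 0 then show ?case by (simp add: pp_def)
next
  case (Suc n)
  show ?case
  proof (cases k)
    case 0 then show ?thesis by (simp add: pp_def)
  next
    case (Suc j)
    have A: "gb p n j * pp p (Suc j) * pp p (Suc n - Suc j) = pp p n * (1 - p ^ Suc j)"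
    proof -
      have "j \<le> n" using Suc.prems Suc by simp
      have "gb p n j * pp p (Suc j) * pp p (Suc n - Suc j) = (gb p n j * pp p j * pp p (n - j)) * (1 - p ^ Suc j)"
        by (simp add: pp_Suc mult_ac)
      also have "\<dots> = pp p n * (1 - p ^ Suc j)" using Suc.IH[OF \<open>j \<le> n\<close>] by simp
      finally show ?thesis .
    qed
    have B: "p ^ Suc j * gb p n (Suc j) * pp p (Suc j) * pp p (Suc n - Suc j) = p ^ Suc j * pp p n * (1 - p ^ (Suc n - Suc j))"
    proof (cases "Suc j \<le> n")
      case True
      have e: "Suc n - Suc j = Suc (n - Suc j)" using True by simp
      have "p ^ Suc j * gb p n (Suc j) * pp p (Suc j) * pp p (Suc n - Suc j) = p ^ Suc j * (gb p n (Suc j) * pp p (Suc j) * pp p (n - Suc j)) * (1 - p ^ (Suc n - Suc j))"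
        unfolding e by (simp add: pp_Suc mult_ac)
      also have "\<dots> = p ^ Suc j * pp p n * (1 - p ^ (Suc n - Suc j))" using Suc.IH[OF True] by simp
      finally show ?thesis .
    next
      case False
      then have "Suc n - Suc j = 0" using Suc.prems Suc by simp
      then show ?thesis using False by (simp add: gb_big)
    qed
    have "gb p (Suc n) k * pp p k * pp p (Suc n - k)
        = gb p n j * pp p (Suc j) * pp p (Suc n - Suc j) + p ^ Suc j * gb p n (Suc j) * pp p (Suc j) * pp p (Suc n - Suc j)"
      using Suc by (simp add: algebra_simps)
    also have "\<dots> = pp p n * ((1 - p ^ Suc j) + p ^ Suc j * (1 - p ^ (Suc n - Suc j)))"
      unfolding A B by (simp add: algebra_simps)
    also have "(1 - p ^ Suc j) + p ^ Suc j * (1 - p ^ (Suc n - Suc j)) = 1 - p ^ Suc n"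
    proof -
      have "Suc j + (Suc n - Suc j) = Suc n" using Suc.prems Suc by simp
      then have pw: "p ^ Suc j * p ^ (Suc n - Suc j) = p ^ Suc n" by (metis power_add)
      have "(1 - p ^ Suc j) + p ^ Suc j * (1 - p ^ (Suc n - Suc j)) = 1 - p ^ Suc j * p ^ (Suc n - Suc j)"
        by (simp add: algebra_simps)
      then show ?thesis unfolding pw .
    qed
    finally show ?thesis by (simp add: pp_Suc)
  qed
qed

lemma prod_split_add: "(\<Prod>j<n + m. g j) = (\<Prod>j<n. g j) * (\<Prod>j<m. g (n + j))" for g :: "nat \<Rightarrow> 'a::comm_monoid_mult"
  by (induction m) (simp_all add: mult_ac)

lemma sum_split_add: "(\<Sum>j<n + m. g j) = (\<Sum>j<n. g j) + (\<Sum>j<m. g (n + j))" for g :: "nat \<Rightarrow> 'a::comm_monoid_add"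
  by (induction m) (simp_all add: add_ac)

lemma prod_reflect: "(\<Prod>i<n. g (n - Suc i)) = (\<Prod>i<n. g i)" for g :: "nat \<Rightarrow> 'a::comm_monoid_mult"
proof (induction n)
  case 0 then show ?case by simp
next
  case (Suc n)
  have "(\<Prod>i<Suc n. g (Suc n - Suc i)) = g n * (\<Prod>i<n. g (n - Suc i))"
    by (subst prod.lessThan_Suc_shift) simp
  then show ?case using Suc.IH by (simp add: mult_ac)
qed

lemma sum_reflect: "(\<Sum>i<n. g (n - Suc i)) = (\<Sum>i<n. g i)" for g :: "nat \<Rightarrow> 'a::comm_monoid_add"
proof (induction n)
  case 0 then show ?case by simp
next
  case (Suc n)
  have "(\<Sum>i<Suc n. g (Suc n - Suc i)) = g n + (\<Sum>i<n. g (n - Suc i))"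
    by (subst sum.lessThan_Suc_shift) simp
  then show ?case using Suc.IH by (simp add: add_ac)
qed

lemma sum_two_sided: "(\<Sum>k\<le>2 * n. g k) = (\<Sum>j\<le>n. g (n + j)) + (\<Sum>j<n. g (n - Suc j))" for g :: "nat \<Rightarrow> 'a::comm_monoid_add"
proof -
  have "(\<Sum>k\<le>2 * n. g k) = (\<Sum>k<n + Suc n. g k)"
    by (simp add: lessThan_Suc_atMost[symmetric] mult_2)
  also have "\<dots> = (\<Sum>j<n. g j) + (\<Sum>j<Suc n. g (n + j))" by (rule sum_split_add)
  also have "(\<Sum>j<Suc n. g (n + j)) = (\<Sum>j\<le>n. g (n + j))" by (simp add: lessThan_Suc_atMost)
  also have "(\<Sum>j<n. g j) = (\<Sum>j<n. g (n - Suc j))" by (rule sum_reflect[symmetric])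
  finally show ?thesis by (simp add: add_ac)
qed

lemma prod_pow_tri: "(\<Prod>i<n. (s^2) ^ Suc i) = s ^ (n * Suc n)" for s :: complex
proof (induction n)
  case 0 then show ?case by simp
next
  case (Suc n)
  have eq: "n * Suc n + 2 * Suc n = Suc n * Suc (Suc n)" by (simp add: algebra_simps)
  have "(\<Prod>i<Suc n. (s^2) ^ Suc i) = s ^ (n * Suc n) * (s^2) ^ Suc n" by (simp only: prod.lessThan_Suc Suc.IH)
  also have "(s^2) ^ Suc n = s ^ (2 * Suc n)" by (simp only: power_mult)
  also have "s ^ (n * Suc n) * s ^ (2 * Suc n) = s ^ (n * Suc n + 2 * Suc n)" by (simp only: power_add)
  finally show ?case by (simp only: eq)
qed

lemma int_km1: "int (k * (k - 1)) = int k * int k - int k"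
  by (cases k) (simp_all add: algebra_simps)

lemma fin_jtp:
  fixes s x :: complex and n :: nat
  assumes s0: "s \<noteq> 0" and x0: "x \<noteq> 0"
  shows "(\<Prod>i<n. 1 - (s^2 / x) * (s^2) ^ i) * (\<Prod>i<n. 1 - x * (s^2) ^ i)
       = (\<Sum>k\<le>2 * n. gb (s^2) (2 * n) k * ((- x) powi (int k - int n) * s powi ((int k - int n) * (int k - int n) - (int k - int n))))"
proof -
  define p where "p = s^2"
  have p0: "p \<noteq> 0" unfolding p_def using s0 by simp
  define a where "a = x / p ^ n"
  define L1 where "L1 = (\<Prod>i<n. 1 - (p / x) * p ^ i)"
  define L2 where "L2 = (\<Prod>i<n. 1 - x * p ^ i)"
  define D where "D = (\<Prod>i<n. p ^ Suc i)"
  have D: "D = s ^ (n * Suc n)" unfolding D_def p_def by (rule prod_pow_tri)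
  have D0: "D \<noteq> 0" unfolding D using s0 by simp
  have "(\<Prod>j<2 * n. 1 - a * p ^ j) = (\<Prod>j<n. 1 - a * p ^ j) * (\<Prod>j<n. 1 - a * p ^ (n + j))"
    unfolding mult_2 by (rule prod_split_add)
  also have "(\<Prod>j<n. 1 - a * p ^ (n + j)) = L2"
    unfolding L2_def a_def using p0 by (intro prod.cong refl) (simp add: power_add)
  also have "(\<Prod>j<n. 1 - a * p ^ j) = (\<Prod>i<n. 1 - a * p ^ (n - Suc i))"
    by (rule prod_reflect[symmetric])
  also have "\<dots> = (\<Prod>i<n. (- x / p ^ Suc i) * (1 - (p / x) * p ^ i))"
  proof (intro prod.cong refl)
    fix i assume "i \<in> {..<n}"
    then have "n = (n - Suc i) + Suc i" by simp
    then have "p ^ n = p ^ (n - Suc i) * p ^ Suc i" by (metis power_add)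
    then have "a * p ^ (n - Suc i) = x / p ^ Suc i" unfolding a_def using p0 by (simp add: field_simps)
    then show "1 - a * p ^ (n - Suc i) = (- x / p ^ Suc i) * (1 - (p / x) * p ^ i)"
      using p0 x0 by (simp add: field_simps)
  qed
  also have "\<dots> = (\<Prod>i<n. - x / p ^ Suc i) * L1" unfolding L1_def by (rule prod.distrib)
  also have "(\<Prod>i<n. - x / p ^ Suc i) = (- x) ^ n / D" unfolding D_def by (simp only: prod_dividef prod_constant card_lessThan)
  finally have lhs: "(\<Prod>j<2 * n. 1 - a * p ^ j) = (- x) ^ n / D * L1 * L2" .
  have rhs: "(\<Prod>j<2 * n. 1 - a * p ^ j) = (\<Sum>k\<le>2 * n. gb p (2 * n) k * (- a) ^ k * s ^ (k * (k - 1)))"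
    unfolding p_def by (rule qbinomial)
  have "L1 * L2 = (\<Sum>k\<le>2 * n. gb p (2 * n) k * (- a) ^ k * s ^ (k * (k - 1))) * (D / (- x) ^ n)"
    using lhs rhs D0 x0 by (simp add: field_simps)
  also have "\<dots> = (\<Sum>k\<le>2 * n. gb p (2 * n) k * ((- a) ^ k * s ^ (k * (k - 1)) * (D / (- x) ^ n)))"
    by (simp only: sum_distrib_right mult.assoc)
  also have "\<dots> = (\<Sum>k\<le>2 * n. gb p (2 * n) k * ((- x) powi (int k - int n) * s powi ((int k - int n) * (int k - int n) - (int k - int n))))"
  proof (rule sum.cong[OF refl])
    fix k
    have ma: "- a = (- x) / p ^ n" unfolding a_def by simp
    have "(- a) ^ k = (- x) ^ k / (p ^ n) ^ k" unfolding ma by (simp only: power_divide)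
    also have "(p ^ n) ^ k = s ^ (2 * n * k)" unfolding p_def by (simp only: power_mult)
    finally have xa: "(- a) ^ k = (- x) ^ k / s ^ (2 * n * k)" .
    have e1: "(- x) powi (int k - int n) = (- x) ^ k / (- x) ^ n"
      using x0 by (simp add: power_int_diff)
    have e2: "s powi ((int k - int n) * (int k - int n) - (int k - int n)) = s ^ (k * (k - 1)) * s ^ (n * Suc n) / s ^ (2 * n * k)"
    proof -
      have "(int k - int n) * (int k - int n) - (int k - int n) = (int (k * (k - 1)) + int (n * Suc n)) - int (2 * n * k)"
        unfolding int_km1 by (simp add: algebra_simps)
      then have "s powi ((int k - int n) * (int k - int n) - (int k - int n)) = s powi ((int (k * (k - 1)) + int (n * Suc n)) - int (2 * n * k))"
        by (rule arg_cong[where f="power_int s"])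
      also have "\<dots> = s powi (int (k * (k - 1))) * s powi (int (n * Suc n)) / s powi (int (2 * n * k))"
        by (simp only: power_int_diff[OF disjI1[OF s0]] power_int_add[OF disjI1[OF s0]])
      finally show ?thesis by (simp only: power_int_of_nat)
    qed
    have inner: "(- a) ^ k * s ^ (k * (k - 1)) * (D / (- x) ^ n) = (- x) powi (int k - int n) * s powi ((int k - int n) * (int k - int n) - (int k - int n))"
      unfolding e1 e2 xa D using s0 x0 by (simp add: field_simps)
    show "gb p (2 * n) k * ((- a) ^ k * s ^ (k * (k - 1)) * (D / (- x) ^ n)) = gb p (2 * n) k * ((- x) powi (int k - int n) * s powi ((int k - int n) * (int k - int n) - (int k - int n)))"
      by (simp only: inner)
  qed
  finally show ?thesis unfolding L1_def L2_def p_def by (simp add: mult_ac)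
qed

lemma int_summable_to_nat:
  fixes g :: "int \<Rightarrow> complex"
  assumes "g summable_on UNIV"
  shows "summable (\<lambda>j. norm (g (int j)))" "summable (\<lambda>j. norm (g (- int (Suc j))))"
proof -
  have a: "(\<lambda>x. norm (g x)) summable_on UNIV" using assms summable_on_iff_abs_summable_on_complex by blast
  have i1: "inj int" by (auto simp: inj_on_def)
  have i2: "inj (\<lambda>j. - int (Suc j))" by (auto simp: inj_on_def)
  have "(\<lambda>x. norm (g x)) summable_on range int" by (rule summable_on_subset_banach[OF a]) auto
  then have "((\<lambda>x. norm (g x)) \<circ> int) summable_on UNIV" using summable_on_reindex[OF i1] by blast
  then show "summable (\<lambda>j. norm (g (int j)))"
    by (subst (asm) summable_on_UNIV_nonneg_real_iff) (auto simp: o_def)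
  have "(\<lambda>x. norm (g x)) summable_on range (\<lambda>j. - int (Suc j))" by (rule summable_on_subset_banach[OF a]) auto
  then have "((\<lambda>x. norm (g x)) \<circ> (\<lambda>j. - int (Suc j))) summable_on UNIV" using summable_on_reindex[OF i2] by blast
  then show "summable (\<lambda>j. norm (g (- int (Suc j))))"
    by (subst (asm) summable_on_UNIV_nonneg_real_iff) (auto simp: o_def)
qed

lemma pow_Suc_lt1: "0 \<le> (r::real) \<Longrightarrow> r < 1 \<Longrightarrow> r ^ Suc j < 1"
proof -
  assume r: "0 \<le> r" "r < 1"
  have "r ^ j \<le> 1" by (rule power_le_one) (use r in auto)
  then have "r * r ^ j \<le> r" using r by (intro mult_left_le) auto
  then show ?thesis using r by simp
qed

lemma pp_tendsto:
  assumes "norm p < 1"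
  shows "pp p \<longlonglongrightarrow> qp p p"
proof -
  have "pp p = (\<lambda>N. \<Prod>n<N. 1 - p * p ^ n)" unfolding pp_def by (rule ext) simp
  then show ?thesis using qp_tendsto[OF assms, of p] by simp
qed

lemma pp_nonzero:
  assumes "norm p < 1"
  shows "pp p n \<noteq> 0"
proof -
  have "1 - p ^ Suc j \<noteq> 0" for j
  proof -
    have "norm (p ^ Suc j) = norm p ^ Suc j" by (simp add: norm_power norm_mult)
    also have "\<dots> < 1" using assms by (intro pow_Suc_lt1) auto
    finally show "1 - p ^ Suc j \<noteq> 0" by auto
  qed
  then show ?thesis unfolding pp_def by (simp add: prod_zero_iff)
qed

lemma pp_lower:
  assumes "norm p < 1"
  obtains c where "c > 0" "\<And>n. norm (pp p n) \<ge> c"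
proof -
  define r where "r = norm p"
  have r: "0 \<le> r" "r < 1" using assms unfolding r_def by auto
  define F where "F = (\<lambda>j::nat. 1 - r ^ Suc j)"
  have sF: "summable (\<lambda>j. norm (F j - 1))"
    unfolding F_def using r by (simp add: summable_geometric)
  have cF: "convergent_prod F"
    by (intro abs_convergent_prod_imp_convergent_prod summable_imp_abs_convergent_prod sF)
  have F01: "0 < F j" "F j \<le> 1" for j
  proof -
    have "r ^ Suc j < 1" using r by (rule pow_Suc_lt1)
    then show "0 < F j" unfolding F_def by simp
    show "F j \<le> 1" unfolding F_def using r by simp
  qed
  have pos: "0 < prodinf F" by (rule less_0_prodinf[OF cF]) (use F01 in auto)
  show ?thesis
  proof (rule that[OF pos])
    fix n
    have "prodinf F \<le> prod F {..<n}"
      by (rule prod_ge_prodinf[OF convergent_prod_has_prod[OF cF]]) (use F01 in \<open>auto intro: less_imp_le\<close>)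
    also have "prod F {..<n} \<le> (\<Prod>j<n. norm (1 - p ^ Suc j))"
    proof (rule prod_mono)
      fix j assume "j \<in> {..<n}"
      have "norm (p ^ Suc j) = r ^ Suc j" unfolding r_def by (simp add: norm_power norm_mult)
      moreover have "1 - norm (p ^ Suc j) \<le> norm (1 - p ^ Suc j)"
        using norm_triangle_ineq2[of 1 "p ^ Suc j"] by simp
      ultimately show "0 \<le> F j \<and> F j \<le> norm (1 - p ^ Suc j)" using F01[of j] unfolding F_def by auto
    qed
    also have "\<dots> = norm (pp p n)" unfolding pp_def by (simp add: prod_norm)
    finally show "prodinf F \<le> norm (pp p n)" .
  qed
qed

lemma gb_eq:
  assumes "norm p < 1" "k \<le> n"
  shows "gb p n k = pp p n / (pp p k * pp p (n - k))"
  using gb_closed[OF assms(2), of p] pp_nonzero[OF assms(1)] by (simp add: field_simps)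

lemma tannery_seq:
  fixes a :: "nat \<Rightarrow> nat \<Rightarrow> complex"
  assumes lim: "\<And>j. (\<lambda>n. a j n) \<longlonglongrightarrow> b j"
    and bnd: "\<And>j n. norm (a j n) \<le> M j" and M: "summable M"
  shows "(\<lambda>n. \<Sum>j. a j n) \<longlonglongrightarrow> (\<Sum>j. b j)"
proof -
  have "eventually (\<lambda>(j, n). norm (a j n) \<le> M j) (at_top \<times>\<^sub>F sequentially)"
    by (rule always_eventually) (auto simp: bnd)
  from tannerys_theorem[OF lim this M] show ?thesis by simp
qed

lemma jtp:
  fixes s x :: complex
  assumes s: "norm s < 1" "s \<noteq> 0" and x0: "x \<noteq> 0"
  shows "th s x = qp x (s^2) * qp (s^2 / x) (s^2) * qp (s^2) (s^2)"
proof -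
  define p where "p = s^2"
  have np: "norm p < 1" unfolding p_def using s by (simp add: norm_power power_less_one_iff)
  have p0: "p \<noteq> 0" unfolding p_def using s by simp
  define T where "T = (\<lambda>m::int. (- x) powi m * s powi (m * m - m))"
  have TS: "T summable_on UNIV" unfolding T_def by (rule th_summable[OF s x0])
  have thx: "th s x = (\<Sum>j. T (int j)) + (\<Sum>j. T (- int (Suc j)))"
    unfolding th_def T_def[symmetric] by (rule infsum_int_split[OF TS])
  have sT1: "summable (\<lambda>j. norm (T (int j)))" and sT2: "summable (\<lambda>j. norm (T (- int (Suc j))))"
    using int_summable_to_nat[OF TS] by auto
  define P where "P = qp p p"
  have P0: "P \<noteq> 0" unfolding P_def using np by (intro qp_nonzero) auto
  have ppt: "pp p \<longlonglongrightarrow> P" unfolding P_def by (rule pp_tendsto[OF np])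
  obtain c where c: "c > 0" "\<And>n. norm (pp p n) \<ge> c" using pp_lower[OF np] by blast
  have ppn: "\<And>n. pp p n \<noteq> 0" by (rule pp_nonzero[OF np])
  define a1 where "a1 = (\<lambda>j n. if j \<le> n then T (int j) / (pp p (n + j) * pp p (n - j)) else 0)"
  define a2 where "a2 = (\<lambda>j n. if j < n then T (- int (Suc j)) / (pp p (n - Suc j) * pp p (n + Suc j)) else 0)"
  define LHS where "LHS = (\<lambda>n. (\<Prod>i<n. 1 - (p / x) * p ^ i) * (\<Prod>i<n. 1 - x * p ^ i))"
  have eqn: "LHS n = pp p (2 * n) * ((\<Sum>j. a1 j n) + (\<Sum>j. a2 j n))" for n
  proof -
    have "LHS n = (\<Sum>k\<le>2 * n. gb p (2 * n) k * T (int k - int n))"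
      unfolding LHS_def T_def p_def by (rule fin_jtp[OF s(2) x0])
    also have "\<dots> = (\<Sum>j\<le>n. gb p (2 * n) (n + j) * T (int (n + j) - int n)) + (\<Sum>j<n. gb p (2 * n) (n - Suc j) * T (int (n - Suc j) - int n))"
      by (rule sum_two_sided)
    also have "(\<Sum>j\<le>n. gb p (2 * n) (n + j) * T (int (n + j) - int n)) = pp p (2 * n) * (\<Sum>j\<le>n. a1 j n)"
      unfolding sum_distrib_left
    proof (rule sum.cong[OF refl])
      fix j assume j: "j \<in> {..n}"
      have "gb p (2 * n) (n + j) = pp p (2 * n) / (pp p (n + j) * pp p (n - j))"
        using gb_eq[OF np, of "n + j" "2 * n"] j by simp
      then show "gb p (2 * n) (n + j) * T (int (n + j) - int n) = pp p (2 * n) * a1 j n"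
        using j unfolding a1_def by simp
    qed
    also have "(\<Sum>j<n. gb p (2 * n) (n - Suc j) * T (int (n - Suc j) - int n)) = pp p (2 * n) * (\<Sum>j<n. a2 j n)"
      unfolding sum_distrib_left
    proof (rule sum.cong[OF refl])
      fix j assume j: "j \<in> {..<n}"
      have e: "2 * n - (n - Suc j) = n + Suc j" using j by simp
      have "gb p (2 * n) (n - Suc j) = pp p (2 * n) / (pp p (n - Suc j) * pp p (n + Suc j))"
        using gb_eq[OF np, of "n - Suc j" "2 * n"] j e by simp
      moreover have "int (n - Suc j) - int n = - int (Suc j)" using j by simp
      ultimately show "gb p (2 * n) (n - Suc j) * T (int (n - Suc j) - int n) = pp p (2 * n) * a2 j n"
        using j unfolding a2_def by simp
    qed
    also have "(\<Sum>j\<le>n. a1 j n) = (\<Sum>j. a1 j n)"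
      by (rule suminf_finite[symmetric]) (auto simp: a1_def)
    also have "(\<Sum>j<n. a2 j n) = (\<Sum>j. a2 j n)"
      by (rule suminf_finite[symmetric]) (auto simp: a2_def)
    finally show ?thesis by (simp add: algebra_simps)
  qed
  have limL: "LHS \<longlonglongrightarrow> qp (p / x) p * qp x p"
    unfolding LHS_def by (intro tendsto_mult qp_tendsto np)
  have pp_shift1: "(\<lambda>n. pp p (n + j)) \<longlonglongrightarrow> P" for j by (rule LIMSEQ_ignore_initial_segment[OF ppt])
  have pp_shift2: "(\<lambda>n. pp p (n - j)) \<longlonglongrightarrow> P" for j
    by (rule LIMSEQ_offset[of _ j]) (simp add: ppt)
  have bnd: "norm (T m / (u * v)) \<le> norm (T m) / (c * c)" if "norm u \<ge> c" "norm v \<ge> c" for m u v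
  proof -
    have "c * c \<le> norm u * norm v" using that c by (intro mult_mono) auto
    moreover have "0 < norm u * norm v" using that c by (meson less_le_trans mult_pos_pos)
    ultimately have "norm (T m) / (norm u * norm v) \<le> norm (T m) / (c * c)"
      using c by (intro divide_left_mono) auto
    then show ?thesis by (simp add: norm_divide norm_mult)
  qed
  have lim1: "(\<lambda>n. \<Sum>j. a1 j n) \<longlonglongrightarrow> (\<Sum>j. T (int j) / (P * P))"
  proof (rule tannery_seq)
    fix j
    have "(\<lambda>n. T (int j) / (pp p (n + j) * pp p (n - j))) \<longlonglongrightarrow> T (int j) / (P * P)"
      using P0 by (intro tendsto_divide tendsto_mult tendsto_const pp_shift1 pp_shift2) auto
    moreover have "eventually (\<lambda>n. T (int j) / (pp p (n + j) * pp p (n - j)) = a1 j n) sequentially"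
      unfolding a1_def by (rule eventually_mono[OF eventually_ge_at_top[of j]]) auto
    ultimately show "(\<lambda>n. a1 j n) \<longlonglongrightarrow> T (int j) / (P * P)" by (rule Lim_transform_eventually)
  next
    fix j n
    show "norm (a1 j n) \<le> norm (T (int j)) / (c * c)"
      unfolding a1_def using bnd c by auto
  next
    show "summable (\<lambda>j. norm (T (int j)) / (c * c))" by (rule summable_divide[OF sT1])
  qed
  have lim2: "(\<lambda>n. \<Sum>j. a2 j n) \<longlonglongrightarrow> (\<Sum>j. T (- int (Suc j)) / (P * P))"
  proof (rule tannery_seq)
    fix j
    have "(\<lambda>n. T (- int (Suc j)) / (pp p (n - Suc j) * pp p (n + Suc j))) \<longlonglongrightarrow> T (- int (Suc j)) / (P * P)"
      using P0 by (intro tendsto_divide tendsto_mult tendsto_const pp_shift1 pp_shift2) auto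
    moreover have "eventually (\<lambda>n. T (- int (Suc j)) / (pp p (n - Suc j) * pp p (n + Suc j)) = a2 j n) sequentially"
      unfolding a2_def by (rule eventually_mono[OF eventually_ge_at_top[of "Suc j"]]) auto
    ultimately show "(\<lambda>n. a2 j n) \<longlonglongrightarrow> T (- int (Suc j)) / (P * P)" by (rule Lim_transform_eventually)
  next
    fix j n
    show "norm (a2 j n) \<le> norm (T (- int (Suc j))) / (c * c)"
      unfolding a2_def using bnd c by auto
  next
    show "summable (\<lambda>j. norm (T (- int (Suc j))) / (c * c))" by (rule summable_divide[OF sT2])
  qed
  have pp2: "(\<lambda>n. pp p (2 * n)) \<longlonglongrightarrow> P"
  proof -
    have "strict_mono (\<lambda>n::nat. 2 * n)" by (intro strict_monoI) auto
    from LIMSEQ_subseq_LIMSEQ[OF ppt this] show ?thesis by (simp add: o_def)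
  qed
  have limR: "LHS \<longlonglongrightarrow> P * ((\<Sum>j. T (int j) / (P * P)) + (\<Sum>j. T (- int (Suc j)) / (P * P)))"
    unfolding eqn by (intro tendsto_mult tendsto_add pp2 lim1 lim2)
  have "qp (p / x) p * qp x p = P * ((\<Sum>j. T (int j) / (P * P)) + (\<Sum>j. T (- int (Suc j)) / (P * P)))"
    using LIMSEQ_unique[OF limL limR] .
  also have "\<dots> = th s x / P"
    unfolding thx using P0 summable_norm_cancel[OF sT1] summable_norm_cancel[OF sT2]
    by (simp add: suminf_divide field_simps)
  finally show ?thesis unfolding p_def[symmetric] P_def[symmetric] using P0 by (simp add: field_simps)
qed

lemma qp6:
  fixes q a :: complex
  assumes "norm q < 1"
  shows "qp a q = qp a (q^6) * qp (a * q) (q^6) * qp (a * q^2) (q^6) * qp (a * q^3) (q^6) * qp (a * q^4) (q^6) * qp (a * q^5) (q^6)"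
  using qp_split[OF assms, of 6 a] by (simp add: eval_nat_numeral mult_ac)

lemma qp3:
  fixes q a :: complex
  assumes "norm q < 1"
  shows "qp a q = qp a (q^3) * qp (a * q) (q^3) * qp (a * q^2) (q^3)"
  using qp_split[OF assms, of 3 a] by (simp add: eval_nat_numeral mult_ac)

lemma qp2:
  fixes q a :: complex
  assumes "norm q < 1"
  shows "qp a q = qp a (q^2) * qp (a * q) (q^2)"
  using qp_split[OF assms, of 2 a] by (simp add: eval_nat_numeral mult_ac)

lemma decomp:
  fixes q :: complex and P M :: "nat \<Rightarrow> complex"
  assumes q: "norm q < 1"
    and P_def: "P = (\<lambda>k::nat. qp (q^k) (q^6))" and M_def: "M = (\<lambda>k::nat. qp (- (q^k)) (q^6))"
  shows "f 1 q = P 1 * P 2 * P 3 * P 4 * P 5 * P 6"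
    and "f 2 q = P 2 * P 4 * P 6"
    and "f 3 q = P 3 * P 6"
    and "f 6 q = P 6"
    and "f 4 q = P 2 * M 2 * P 4 * M 4 * P 6 * M 6"
    and "f 12 q = P 6 * M 6"
    and "qp (- q) q = M 1 * M 2 * M 3 * M 4 * M 5 * M 6"
    and "qp (- (q^3)) (q^3) = M 3 * M 6"
proof -
  have n2: "norm (q^2) < 1" and n3: "norm (q^3) < 1" and n4: "norm (q^4) < 1" and n6: "norm (q^6) < 1"
    using q by (simp_all add: norm_power power_less_one_iff)
  show "f 1 q = P 1 * P 2 * P 3 * P 4 * P 5 * P 6"
    unfolding f_qp P_def using qp6[OF q, of q] by (simp add: power_Suc[symmetric] power2_eq_square[symmetric] mult_ac)
  show "f 2 q = P 2 * P 4 * P 6"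
    unfolding f_qp P_def using qp3[OF n2, of "q^2"] by (simp add: power_add[symmetric] power_mult[symmetric] mult_ac)
  show "f 3 q = P 3 * P 6"
    unfolding f_qp P_def using qp2[OF n3, of "q^3"] by (simp add: power_add[symmetric] power_mult[symmetric] mult_ac)
  show "f 6 q = P 6"
    unfolding f_qp P_def ..
  show "qp (- q) q = M 1 * M 2 * M 3 * M 4 * M 5 * M 6"
    unfolding M_def using qp6[OF q, of "- q"] by (simp add: power_Suc[symmetric] power2_eq_square[symmetric] mult_ac)
  show "qp (- (q^3)) (q^3) = M 3 * M 6"
    unfolding M_def using qp2[OF n3, of "- (q^3)"] by (simp add: power_add[symmetric] power_mult[symmetric] mult_ac)
  have mul: "\<And>k. qp (q^(2*k)) (q^12) = P k * M k"
    unfolding P_def M_def using qp_mul[OF n6] by (simp add: power_mult[symmetric] mult.commute)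
  show "f 12 q = P 6 * M 6"
    unfolding f_qp using mul[of 6] by simp
  show "f 4 q = P 2 * M 2 * P 4 * M 4 * P 6 * M 6"
    unfolding f_qp using qp3[OF n4, of "q^4"] mul[of 2] mul[of 4] mul[of 6]
    by (simp add: power_add[symmetric] power_mult[symmetric] mult_ac)
qed

lemma star_PM:
  fixes q :: complex
  assumes q: "norm q < 1" "q \<noteq> 0"
  defines "P \<equiv> \<lambda>k::nat. qp (q^k) (q^6)" and "M \<equiv> \<lambda>k::nat. qp (- (q^k)) (q^6)"
  shows "P 1 ^ 2 * P 5 ^ 2 * P 2 ^ 2 * P 4 ^ 2 + M 1 ^ 2 * M 5 ^ 2 * M 2 ^ 2 * M 4 ^ 2 = 2 * M 6 ^ 2 * M 2 * M 4 * M 3 ^ 4"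
proof -
  have s: "norm (q^3) < 1" "q^3 \<noteq> 0" using q by (simp_all add: norm_power power_less_one_iff)
  have n6: "norm (q^6) < 1" using q by (simp add: norm_power power_less_one_iff)
  define E where "E = qp (q^6) (q^6)"
  have h6: "q^6 \<noteq> 1"
  proof
    assume "q^6 = 1"
    then have "norm (q^6) = 1" by simp
    with n6 show False by simp
  qed
  have E0: "E \<noteq> 0" unfolding E_def using n6 h6 by (intro qp_nonzero) auto
  have J: "\<And>z. z \<noteq> 0 \<Longrightarrow> th (q^3) z = qp z (q^6) * qp (q^6 / z) (q^6) * E"
    unfolding E_def using jtp[OF s] by (simp flip: power_mult)
  have t1: "th (q^3) q = P 1 * P 5 * E"
    using J[of q] q unfolding P_def by (simp add: power_Suc[symmetric] eval_nat_numeral field_simps)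
  have t2: "th (q^3) (q^2) = P 2 * P 4 * E"
    using J[of "q^2"] q unfolding P_def by (simp add: power_Suc[symmetric] eval_nat_numeral field_simps)
  have t3: "th (q^3) (- q) = M 1 * M 5 * E"
    using J[of "- q"] q unfolding M_def by (simp add: power_Suc[symmetric] eval_nat_numeral field_simps)
  have t4: "th (q^3) (- (q^2)) = M 2 * M 4 * E"
    using J[of "- (q^2)"] q unfolding M_def by (simp add: power_Suc[symmetric] eval_nat_numeral field_simps)
  have t5: "th (q^3) (- (q^3)) = M 3 * M 3 * E"
    using J[of "- (q^3)"] q unfolding M_def by (simp add: power_Suc[symmetric] eval_nat_numeral field_simps)
  have t6: "th (q^3) (-1) = 2 * M 6 * M 6 * E"
  proof -
    have "qp (-1) (q^6) = 2 * M 6" unfolding M_def using qp_head[OF n6, of "-1"] by simp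
    then show ?thesis using J[of "-1"] unfolding M_def by simp
  qed
  have "E^4 * (P 1 ^ 2 * P 5 ^ 2 * P 2 ^ 2 * P 4 ^ 2 + M 1 ^ 2 * M 5 ^ 2 * M 2 ^ 2 * M 4 ^ 2) = E^4 * (2 * M 6 ^ 2 * M 2 * M 4 * M 3 ^ 4)"
    using star_th[OF q] unfolding t1 t2 t3 t4 t5 t6 by (simp add: algebra_simps power2_eq_square eval_nat_numeral)
  then show ?thesis using E0 by simp
qed

lemma qpow_facts:
  fixes q :: complex
  assumes "norm q < 1" "k > 0"
  shows "norm (q^k) < 1" "q^k \<noteq> 1" "norm (- (q^k)) \<le> 1" "- (q^k) \<noteq> 1" "norm (q^k) \<le> 1"
proof -
  show n: "norm (q^k) < 1" using assms by (simp add: norm_power power_less_one_iff)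
  then show "norm (q^k) \<le> 1" "norm (- (q^k)) \<le> 1" by simp_all
  show "q^k \<noteq> 1" using n by auto
  show "- (q^k) \<noteq> 1"
  proof
    assume "- (q^k) = 1"
    then have "norm (- (q^k)) = 1" by simp
    with n show False by simp
  qed
qed

theorem main_result:
  fixes q :: complex
  assumes "norm q < 1"
  shows "(f 2 q)^2 * f 3 q * (f 12 q)^3 / ((f 4 q)^4 * (f 6 q)^2)
         + (f 2 q)^4 * (f 3 q)^5 * (f 12 q)^3 / ((f 1 q)^4 * (f 4 q)^4 * (f 6 q)^4)
         = 2 * (f 2 q * (f 6 q)^5 / ((f 1 q)^2 * f 3 q * (f 4 q)^3))"
proof (cases "q = 0")
  case True
  have "f m 0 = 1" if "m > 0" for m
  proof -
    have "(\<lambda>n::nat. 1 - (0::complex) ^ (m * Suc n)) = (\<lambda>n. 1)" using that by (intro ext) simp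
    then show ?thesis unfolding f_def by simp
  qed
  then show ?thesis using True by simp
next
  case False
  have q: "norm q < 1" "q \<noteq> 0" using assms False by auto
  define P where "P = (\<lambda>k::nat. qp (q^k) (q^6))"
  define M where "M = (\<lambda>k::nat. qp (- (q^k)) (q^6))"
  have n6: "norm (q^6) < 1" using q by (simp add: norm_power power_less_one_iff)
  have P0: "P k \<noteq> 0" if "k > 0" for k
    unfolding P_def using qpow_facts[OF q(1) that] n6 by (intro qp_nonzero) auto
  have M0: "M k \<noteq> 0" if "k > 0" for k
    unfolding M_def using qpow_facts[OF q(1) that] n6 by (intro qp_nonzero) auto
  note D = decomp[OF q(1) P_def M_def]
  have R1: "P 1 * P 2 * P 3 * P 4 * P 5 * P 6 * (M 1 * M 2 * M 3 * M 4 * M 5 * M 6) = P 2 * P 4 * P 6"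
  proof -
    have "qp q q * qp (- q) q = qp (q^2) (q^2)" using qp_mul[OF q(1), of q] by simp
    then show ?thesis using D(1) D(2) D(7) unfolding f_qp by simp
  qed
  have R2: "P 3 * P 6 * (M 3 * M 6) = P 6"
  proof -
    have n3: "norm (q^3) < 1" using q by (simp add: norm_power power_less_one_iff)
    have "qp (q^3) (q^3) * qp (- (q^3)) (q^3) = qp (q^6) (q^6)" using qp_mul[OF n3, of "q^3"] by (simp flip: power_mult)
    then show ?thesis using D(3) D(4) D(8) unfolding f_qp by simp
  qed
  have R2': "P 3 * M 3 * M 6 = 1" using R2 P0[of 6] by (simp add: field_simps)
  have R3: "P 1 * P 5 * M 1 * M 2 * M 4 * M 5 = 1"
  proof -
    have "P 2 * P 4 * P 6 * ((P 1 * P 5 * M 1 * M 2 * M 4 * M 5) * (P 3 * M 3 * M 6)) = P 2 * P 4 * P 6 * 1"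
      using R1 by (simp add: algebra_simps)
    then show ?thesis using R2' P0[of 2] P0[of 4] P0[of 6] by simp
  qed
  have ST: "P 1 ^ 2 * P 5 ^ 2 * P 2 ^ 2 * P 4 ^ 2 + M 1 ^ 2 * M 5 ^ 2 * M 2 ^ 2 * M 4 ^ 2 = 2 * M 6 ^ 2 * M 2 * M 4 * M 3 ^ 4"
    unfolding P_def M_def by (rule star_PM[OF q])
  define X where "X = P 1 ^ 4 * P 5 ^ 4 * P 2 ^ 2 * P 4 ^ 2"
  have key: "X + 1 = 2 * P 1 ^ 2 * P 5 ^ 2 * M 2 * M 4 / (P 3 ^ 4 * M 6 ^ 2)"
  proof -
    have "P 1 ^ 2 * P 5 ^ 2 * (P 1 ^ 2 * P 5 ^ 2 * P 2 ^ 2 * P 4 ^ 2 + M 1 ^ 2 * M 5 ^ 2 * M 2 ^ 2 * M 4 ^ 2)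
        = X + (P 1 * P 5 * M 1 * M 2 * M 4 * M 5) ^ 2"
      unfolding X_def by (simp add: algebra_simps power2_eq_square eval_nat_numeral)
    also have "\<dots> = X + 1" unfolding R3 by simp
    finally have a: "X + 1 = P 1 ^ 2 * P 5 ^ 2 * (2 * M 6 ^ 2 * M 2 * M 4 * M 3 ^ 4)" unfolding ST by simp
    have "P 1 ^ 2 * P 5 ^ 2 * (2 * M 6 ^ 2 * M 2 * M 4 * M 3 ^ 4) * (P 3 ^ 4 * M 6 ^ 2)
        = 2 * P 1 ^ 2 * P 5 ^ 2 * M 2 * M 4 * (P 3 * M 3 * M 6) ^ 4"
      by (simp add: algebra_simps power2_eq_square eval_nat_numeral)
    also have "\<dots> = 2 * P 1 ^ 2 * P 5 ^ 2 * M 2 * M 4" unfolding R2' by simp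
    finally show ?thesis unfolding a using P0[of 3] M0[of 6] by (simp add: field_simps)
  qed
  have nz: "P 1 \<noteq> 0" "P 2 \<noteq> 0" "P 3 \<noteq> 0" "P 4 \<noteq> 0" "P 5 \<noteq> 0" "P 6 \<noteq> 0"
           "M 2 \<noteq> 0" "M 4 \<noteq> 0" "M 6 \<noteq> 0" using P0 M0 by auto
  define K where "K = P 3 / (P 1 ^ 4 * P 5 ^ 4 * P 2 ^ 4 * P 4 ^ 4 * M 2 ^ 4 * M 4 ^ 4 * M 6)"
  have L: "(f 2 q)^2 * f 3 q * (f 12 q)^3 / ((f 4 q)^4 * (f 6 q)^2)
         + (f 2 q)^4 * (f 3 q)^5 * (f 12 q)^3 / ((f 1 q)^4 * (f 4 q)^4 * (f 6 q)^4) = K * (X + 1)"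
    unfolding D(1-6) K_def X_def using nz by (simp add: field_simps eval_nat_numeral)
  have R: "2 * (f 2 q * (f 6 q)^5 / ((f 1 q)^2 * f 3 q * (f 4 q)^3)) = K * (2 * P 1 ^ 2 * P 5 ^ 2 * M 2 * M 4 / (P 3 ^ 4 * M 6 ^ 2))"
    unfolding D(1-6) K_def using nz by (simp add: field_simps eval_nat_numeral)
  show ?thesis unfolding L R key ..
qed

theorem lemma3p1:
  fixes q :: complex
  assumes "norm q < 1"
  shows "(f 2 q)^2 * f 3 q * (f 12 q)^3 / ((f 4 q)^4 * (f 6 q)^2)
         + (f 2 q)^4 * (f 3 q)^5 * (f 12 q)^3 / ((f 1 q)^4 * (f 4 q)^4 * (f 6 q)^4)
         = 2 * (f 2 q * (f 6 q)^5 / ((f 1 q)^2 * f 3 q * (f 4 q)^3))"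
  using assms by (rule main_result)

end
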